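(* Let $m\ge 2$, $n\ge 1$, and let $\mathcal{A}\in\mathbb{S}_{m,n}$ be a tensor with all entries nonnegative. Suppose $\mathcal{A}=\mathcal{B}+\mathcal{C}$ with $\mathcal{B}=\sum_{k=1}^{r_1}(u^{(k)})^m$ and $\mathcal{C}=\sum_{j=1}^{r_2}(v^{(j)})^m$, where $u^{(k)}\in\mathbb{R}^n$ for all $k\in[r_1]$ and $v^{(j)}\in\mathbb{R}^n_+$ for all $j\in[r_2]$. If there exists an index $i_0\in[n]$ such that $u^{(k)}_{i_0}>0$ for all $k\in[r_1]$, then $\mathcal{A}$ is doubly nonnegative.
   Context: $[n]=\{1,\dots,n\}$. $\mathbb{T}_{m,n}$ is the space of real $m$th order $n$-dimensional tensors $\mathcal{A}=(a_{i_1\ldots i_m})$, $i_j\in[n]$, and $\mathbb{S}_{m,n}$ is the subspace of symmetric tensors (entries invariant under all permutations of the indices). For $x\in\mathbb{R}^n$, $x^m\in\mathbb{S}_{m,n}$ is the tensor with entries $(x^m)_{i_1\ldots i_m}=x_{i_1}\cdots x_{i_m}$. For $\mathcal{A}\in\mathbb{T}_{m,n}$, $\mathcal{A}x^{m-1}\in\mathbb{R}^n$ has entries $(\mathcal{A}x^{m-1})_i=\sum_{i_2,\dots,i_m\in[n]}a_{ii_2\ldots i_m}x_{i_2}\cdots x_{i_m}$, and $x^{[m-1]}\in\mathbb{R}^n$ has entries $x_i^{m-1}$. A real number $\lambda$ is an H-eigenvalue of $\mathcal{A}\in\mathbb{S}_{m,n}$ if there is $x\in\mathbb{R}^n\setminus\{0\}$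 with $\mathcal{A}x^{m-1}=\lambda x^{[m-1]}$. A tensor $\mathcal{A}\in\mathbb{S}_{m,n}$ is doubly nonnegative if all its entries are nonnegative and all its H-eigenvalues are nonnegative. *)

theory Defs
  imports Complex_Main "HOL-Library.Multiset"
begin

text \<open>Indices are 0-based: the index set [n] is represented by {0..<n}.
  A tensor of order m and dimension n is a function on index lists of length m
  with entries in {0..<n}; vectors in R^n are functions nat => real (only
  components < n matter).\<close>

definition tidx :: "nat \<Rightarrow> nat \<Rightarrow> nat list set" where
  "tidx m n = {is. length is = m \<and> set is \<subseteq> {..<n}}"

definition symmetric_tensor :: "nat \<Rightarrow> nat \<Rightarrow> (nat list \<Rightarrow> real) \<Rightarrow> bool" where
  "symmetric_tensor m n A \<longleftrightarrow>
     (\<forall>is\<in>tidx m n. \<forall>js\<in>tidx m n. mset is = mset js \<longrightarrow> A is = A js)"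

definition tpow :: "(nat \<Rightarrow> real) \<Rightarrow> nat list \<Rightarrow> real" where
  "tpow x is = prod_list (map x is)"

definition tapply :: "nat \<Rightarrow> nat \<Rightarrow> (nat list \<Rightarrow> real) \<Rightarrow> (nat \<Rightarrow> real) \<Rightarrow> nat \<Rightarrow> real" where
  "tapply m n A x i = (\<Sum>is\<in>tidx (m - 1) n. A (i # is) * prod_list (map x is))"

definition H_eigenvalue :: "nat \<Rightarrow> nat \<Rightarrow> (nat list \<Rightarrow> real) \<Rightarrow> real \<Rightarrow> bool" where
  "H_eigenvalue m n A lam \<longleftrightarrow>
     (\<exists>x :: nat \<Rightarrow> real. (\<exists>i<n. x i \<noteq> 0) \<and>
        (\<forall>i<n. tapply m n A x i = lam * x i ^ (m - 1)))"

definition doubly_nonnegative :: "nat \<Rightarrow> nat \<Rightarrow> (nat list \<Rightarrow> real) \<Rightarrow> bool" where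
  "doubly_nonnegative m n A \<longleftrightarrow>
     symmetric_tensor m n A \<and> (\<forall>is\<in>tidx m n. A is \<ge> 0) \<and>
     (\<forall>lam. H_eigenvalue m n A lam \<longrightarrow> lam \<ge> 0)"

end

theory Submission
  imports Defs
begin

lemma tidx_0: "tidx 0 n = {[]}"
  by (auto simp: tidx_def)

lemma tidx_Suc: "tidx (Suc p) n = (\<lambda>(l,is). l#is) ` ({..<n} \<times> tidx p n)"
proof (rule set_eqI)
  fix xs show "xs \<in> tidx (Suc p) n \<longleftrightarrow> xs \<in> (\<lambda>(l,is). l#is) ` ({..<n} \<times> tidx p n)"
    by (cases xs) (auto simp: tidx_def)
qed

lemma tidx_finite: "finite (tidx p n)"
  by (induction p) (auto simp: tidx_0 tidx_Suc)

lemma tidx_sum: "(\<Sum>is\<in>tidx p n. prod_list (map f is)) = (\<Sum>l<n. f l) ^ p" for f :: "nat \<Rightarrow> real"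
proof (induction p)
  case 0 then show ?case by (simp add: tidx_0)
next
  case (Suc p)
  have inj: "inj_on (\<lambda>(l,is). l#is) ({..<n} \<times> tidx p n)"
    by (auto simp: inj_on_def)
  have "(\<Sum>is\<in>tidx (Suc p) n. prod_list (map f is))
      = (\<Sum>(l,is)\<in>{..<n} \<times> tidx p n. f l * prod_list (map f is))"
    unfolding tidx_Suc by (subst sum.reindex[OF inj]) (simp add: case_prod_unfold)
  also have "\<dots> = (\<Sum>l<n. \<Sum>is\<in>tidx p n. f l * prod_list (map f is))"
    by (subst sum.cartesian_product[symmetric]) simp
  also have "\<dots> = (\<Sum>l<n. f l) * (\<Sum>is\<in>tidx p n. prod_list (map f is))"
    unfolding sum_product by simp
  finally show ?case using Suc by simp
qed

lemma prod_list_map_mult: "prod_list (map f xs) * prod_list (map g xs) = prod_list (map (\<lambda>l. f l * g l) xs)"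
  for f g :: "'a \<Rightarrow> real"
proof (induction xs)
  case (Cons a xs)
  have "prod_list (map f (a#xs)) * prod_list (map g (a#xs)) = (f a * g a) * (prod_list (map f xs) * prod_list (map g xs))"
    by (simp add: algebra_simps)
  then show ?case using Cons.IH by simp
qed simp

lemma tapply_formula:
  fixes u v :: "nat \<Rightarrow> nat \<Rightarrow> real"
  assumes "m \<ge> 1" "i < n"
    and A: "\<forall>is\<in>tidx m n. A is = (\<Sum>k<r1. tpow (u k) is) + (\<Sum>j<r2. tpow (v j) is)"
  shows "tapply m n A x i = (\<Sum>k<r1. u k i * (\<Sum>l<n. u k l * x l)^(m-1))
                          + (\<Sum>j<r2. v j i * (\<Sum>l<n. v j l * x l)^(m-1))"
proof -
  let ?T = "tidx (m - 1) n"
  have mem: "is \<in> ?T \<Longrightarrow> i # is \<in> tidx m n" for "is"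
    using assms(1,2) by (auto simp: tidx_def)
  have "tapply m n A x i = (\<Sum>is\<in>?T. ((\<Sum>k<r1. tpow (u k) (i#is)) + (\<Sum>j<r2. tpow (v j) (i#is))) * prod_list (map x is))"
    unfolding tapply_def using A mem by (intro sum.cong) auto
  also have "\<dots> = (\<Sum>is\<in>?T. (\<Sum>k<r1. u k i * prod_list (map (\<lambda>l. u k l * x l) is))
                    + (\<Sum>j<r2. v j i * prod_list (map (\<lambda>l. v j l * x l) is)))"
    by (intro sum.cong refl) (simp add: tpow_def ring_distribs sum_distrib_right sum_distrib_left prod_list_map_mult[symmetric] mult_ac)
  also have "\<dots> = (\<Sum>k<r1. u k i * (\<Sum>is\<in>?T. prod_list (map (\<lambda>l. u k l * x l) is)))
                    + (\<Sum>j<r2. v j i * (\<Sum>is\<in>?T. prod_list (map (\<lambda>l. v j l * x l) is)))"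
    by (simp only: sum.distrib sum_distrib_left; rule arg_cong2[where f="(+)"]; rule sum.swap)
  finally show ?thesis by (simp add: tidx_sum)
qed

theorem mainTheorem1:
  fixes m n r1 r2 :: nat
    and A :: "nat list \<Rightarrow> real"
    and u v :: "nat \<Rightarrow> nat \<Rightarrow> real"
    and i0 :: nat
  assumes "m \<ge> 2" and "n \<ge> 1"
    and "symmetric_tensor m n A"
    and "\<forall>is\<in>tidx m n. A is \<ge> 0"
    and "\<forall>is\<in>tidx m n. A is = (\<Sum>k<r1. tpow (u k) is) + (\<Sum>j<r2. tpow (v j) is)"
    and "\<forall>j<r2. \<forall>i<n. v j i \<ge> 0"
    and "i0 < n"
    and "\<forall>k<r1. u k i0 > 0"
  shows "doubly_nonnegative m n A"
  unfolding doubly_nonnegative_def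
proof (intro conjI allI impI)
  show "symmetric_tensor m n A" "\<forall>is\<in>tidx m n. A is \<ge> 0" using assms by auto
  fix lam assume "H_eigenvalue m n A lam"
  then obtain x where x: "\<exists>i<n. x i \<noteq> 0" and eig: "\<forall>i<n. tapply m n A x i = lam * x i ^ (m - 1)"
    unfolding H_eigenvalue_def by blast
  define s where "s k = (\<Sum>l<n. u k l * x l)" for k
  define t where "t j = (\<Sum>l<n. v j l * x l)" for j
  have F: "tapply m n A x i = (\<Sum>k<r1. u k i * s k^(m-1)) + (\<Sum>j<r2. v j i * t j^(m-1))" if "i < n" for i
    unfolding s_def t_def using tapply_formula[OF _ that assms(5)] assms(1) by simp
  show "lam \<ge> 0"
  proof (cases "even m")
    case True
    have "(\<Sum>i<n. x i * tapply m n A x i) = (\<Sum>k<r1. s k ^ m) + (\<Sum>j<r2. t j ^ m)"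
    proof -
      have "(\<Sum>i<n. x i * tapply m n A x i) = (\<Sum>i<n. (\<Sum>k<r1. x i * u k i * s k^(m-1)) + (\<Sum>j<r2. x i * v j i * t j^(m-1)))"
        by (intro sum.cong refl) (simp add: F sum_distrib_left algebra_simps)
      also have "\<dots> = (\<Sum>k<r1. s k^(m-1) * (\<Sum>i<n. u k i * x i)) + (\<Sum>j<r2. t j^(m-1) * (\<Sum>i<n. v j i * x i))"
        by (simp add: sum.distrib sum.swap[of _ "{..<n}"] sum_distrib_left algebra_simps)
      also have "\<dots> = (\<Sum>k<r1. s k ^ m) + (\<Sum>j<r2. t j ^ m)"
      proof -
        have e: "a^(m-1) * a = a^m" for a :: real using assms(1)
          by (cases m) (auto simp: mult.commute)
        have s': "(\<Sum>i<n. u k i * x i) = s k" for k by (simp add: s_def)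
        have t': "(\<Sum>i<n. v k i * x i) = t k" for k by (simp add: t_def)
        show ?thesis by (simp only: s' t' e)
      qed
      finally show ?thesis .
    qed
    moreover have "(\<Sum>i<n. x i * tapply m n A x i) = lam * (\<Sum>i<n. x i ^ m)"
    proof -
      have e: "a * a^(m - Suc 0) = a^m" for a :: real using assms(1)
        by (cases m) auto
      show ?thesis using eig by (simp add: sum_distrib_left algebra_simps e)
    qed
    moreover have "(\<Sum>k<r1. s k ^ m) + (\<Sum>j<r2. t j ^ m) \<ge> 0"
      using True by (intro add_nonneg_nonneg sum_nonneg) (auto simp: zero_le_even_power)
    moreover have "(\<Sum>i<n. x i ^ m) > 0"
    proof -
      obtain i where i: "i < n" "x i \<noteq> 0" using x by blast
      have "x i ^ m > 0" using True i by (simp add: zero_less_power_eq)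
      moreover have "(\<Sum>i<n. x i ^ m) \<ge> x i ^ m"
        using i True by (intro member_le_sum) (auto simp: zero_le_even_power)
      ultimately show ?thesis by linarith
    qed
    ultimately have "lam * (\<Sum>i<n. x i ^ m) \<ge> 0" "(\<Sum>i<n. x i ^ m) > 0" by simp_all
    then show ?thesis by (simp add: zero_le_mult_iff)
  next
    case False
    then have ev: "even (m - 1)" using assms(1) by simp
    have vnn: "(\<Sum>j<r2. v j i * t j^(m-1)) \<ge> 0" if "i < n" for i
      using assms(6) that ev by (intro sum_nonneg mult_nonneg_nonneg) (auto simp: zero_le_even_power)
    show ?thesis
    proof (cases "x i0 = 0")
      case False
      have "(\<Sum>k<r1. u k i0 * s k^(m-1)) \<ge> 0"
        using assms(8) ev by (intro sum_nonneg) (auto intro!: mult_nonneg_nonneg simp: zero_le_even_power less_imp_le)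
      then have "lam * x i0 ^ (m-1) \<ge> 0"
        using eig F[OF assms(7)] vnn[OF assms(7)] assms(7) by simp
      moreover have "x i0 ^ (m-1) > 0" using False ev
        by (simp add: zero_less_power_eq)
      ultimately show ?thesis by (simp add: zero_le_mult_iff)
    next
      case True
      have "(\<Sum>k<r1. u k i0 * s k^(m-1)) + (\<Sum>j<r2. v j i0 * t j^(m-1)) = 0"
        using eig F[OF assms(7)] True assms(1) assms(7) by (simp add: power_0_left)
      moreover have nn1: "\<forall>k\<in>{..<r1}. u k i0 * s k^(m-1) \<ge> 0"
        using assms(8) ev by (auto intro!: mult_nonneg_nonneg simp: zero_le_even_power less_imp_le)
      ultimately have "(\<Sum>k<r1. u k i0 * s k^(m-1)) = 0"
      proof -
        have "0 \<le> (\<Sum>k<r1. u k i0 * s k^(m-1))" using nn1 by (intro sum_nonneg) auto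
        then show ?thesis using vnn[OF assms(7)] \<open>(\<Sum>k<r1. u k i0 * s k^(m-1)) + (\<Sum>j<r2. v j i0 * t j^(m-1)) = 0\<close> by linarith
      qed
      then have "\<forall>k\<in>{..<r1}. u k i0 * s k^(m-1) = 0"
        using nn1 by (subst sum_nonneg_eq_0_iff[symmetric]) auto
      then have s0: "\<forall>k<r1. s k = 0"
      proof (intro allI impI)
        fix k assume k: "k < r1"
        assume h: "\<forall>k\<in>{..<r1}. u k i0 * s k^(m-1) = 0"
        have "u k i0 * s k^(m-1) = 0" using h k by simp
        moreover have "u k i0 \<noteq> 0" using assms(8) k by force
        ultimately have "s k^(m-1) = 0" by simp
        then show "s k = 0" using assms(1) by (simp add: power_eq_0_iff)
      qed
      obtain i where i: "i < n" "x i \<noteq> 0" using x by blast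
      have "lam * x i ^ (m-1) \<ge> 0"
      proof -
        have z: "(0::real) ^ (m - Suc 0) = 0" using assms(1) by simp
        have "tapply m n A x i = (\<Sum>j<r2. v j i * t j^(m-1))"
          using F[OF i(1)] s0 z by simp
        moreover have "tapply m n A x i = lam * x i ^ (m-1)" using eig i(1) by blast
        ultimately show ?thesis using vnn[OF i(1)] by linarith
      qed
      moreover have "x i ^ (m-1) > 0" using i ev by (simp add: zero_less_power_eq)
      ultimately show ?thesis by (simp add: zero_le_mult_iff)
    qed
  qed
qed

end
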